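(* Let $m=p_1^{\alpha_1}p_2^{\alpha_2}$, where $p_1,p_2>2$ are distinct primes and $\alpha_1,\alpha_2$ are positive integers. Let $t=\mathrm{ord}_m(2)$ and let $\gamma\in\mathbb{F}_{2^t}^*$ be a primitive $m$th root of unity. Then every $S_m$-decoding polynomial has at least $3$ monomials (i.e. at least 3 nonzero coefficients).
   Context: $\mathrm{ord}_m(2)$ is the multiplicative order of $2$ modulo $m$. The canonical set of $m$ is $S_m=\{s_{01},s_{10},s_{11}\}\subseteq\mathbb{Z}_m$, where for $\sigma=(\sigma_1,\sigma_2)\in\{0,1\}^2\setminus\{(0,0)\}$, $s_\sigma$ is the unique element of $\mathbb{Z}_m$ with $s_\sigma\equiv\sigma_1 \pmod{p_1^{\alpha_1}}$ and $s_\sigma\equiv \sigma_2\pmod{p_2^{\alpha_2}}$ (so $s_{11}=1$). An $S_m$-decoding polynomial is a polynomial $P(X)\in\mathbb{F}_{2^t}[X]$ such that $P(\gamma^s)=0$ for every $s\in S_m$ and $P(\gamma^0)=P(1)=1$. *)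

theory Defs
  imports "HOL-Computational_Algebra.Polynomial" "HOL-Number_Theory.Number_Theory"
begin

text \<open>The element s_sigma of Z_m (represented in {0..<q1*q2}) with
  s = e1 mod q1 and s = e2 mod q2, where q1 = p1^a1, q2 = p2^a2.\<close>
definition canon_elem :: "nat \<Rightarrow> nat \<Rightarrow> nat \<Rightarrow> nat \<Rightarrow> nat" where
  "canon_elem q1 q2 e1 e2 =
     (THE s. s < q1 * q2 \<and> [s = e1] (mod q1) \<and> [s = e2] (mod q2))"

definition canonical_set :: "nat \<Rightarrow> nat \<Rightarrow> nat set" where
  "canonical_set q1 q2 =
     {canon_elem q1 q2 0 1, canon_elem q1 q2 1 0, canon_elem q1 q2 1 1}"

definition decoding_poly :: "nat set \<Rightarrow> 'a::field \<Rightarrow> 'a poly \<Rightarrow> bool" where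
  "decoding_poly S \<gamma> P \<longleftrightarrow> (\<forall>s\<in>S. poly P (\<gamma> ^ s) = 0) \<and> poly P 1 = 1"

end

theory Submission
  imports Defs
begin

lemma canon_prop:
  assumes "coprime q1 q2" "q1 \<noteq> 0" "q2 \<noteq> 0"
  shows "canon_elem q1 q2 e1 e2 < q1 * q2 \<and> [canon_elem q1 q2 e1 e2 = e1] (mod q1)
     \<and> [canon_elem q1 q2 e1 e2 = e2] (mod q2)"
  unfolding canon_elem_def
  by (rule theI', rule binary_chinese_remainder_unique_nat[OF assms])

lemma pow_mod_m:
  fixes x :: "'a::field"
  assumes "x ^ m = 1"
  shows "x ^ n = x ^ (n mod m)"
proof -
  have "x ^ n = x ^ (m * (n div m) + n mod m)" by simp
  also have "\<dots> = (x ^ m) ^ (n div m) * x ^ (n mod m)" by (simp only: power_add power_mult)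
  finally show ?thesis using assms by simp
qed

lemma two_terms_false:
  fixes a b u v :: "'a::field"
  assumes ab: "a + b = 1" and u0: "u \<noteq> 0" and v0: "v \<noteq> 0"
    and um: "u ^ m = 1" and vm: "v ^ m = 1" and m1: "m > 1"
    and e1: "a * u + b * v = 0"
    and e2: "a * u ^ s1 + b * v ^ s1 = 0"
    and e3: "a * u ^ s2 + b * v ^ s2 = 0"
    and sm: "(s1 + s2) mod m = 1"
  shows False
proof -
  have b0: "b \<noteq> 0"
  proof
    assume "b = 0" then have "a = 0" using e1 u0 by simp
    with ab \<open>b = 0\<close> show False by simp
  qed
  define x where "x = v / u"
  define c where "c = - a / b"
  have xm: "x ^ m = 1" using um vm u0 by (simp add: x_def power_divide)
  have key: "x ^ s = c" if "a * u ^ s + b * v ^ s = 0" for s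
  proof -
    have "b * v ^ s = - a * u ^ s" using that by (simp add: eq_neg_iff_add_eq_0 add.commute)
    then show ?thesis using u0 b0 unfolding x_def c_def
      by (simp add: power_divide field_simps)
  qed
  have x1: "x = c" using key[of 1] e1 by simp
  have "x ^ (s1 + s2) = c * c" using key[OF e2] key[OF e3] by (simp add: power_add)
  moreover have "x ^ (s1 + s2) = x" using pow_mod_m[OF xm, of "s1+s2"] sm by simp
  ultimately have "c * c = c" using x1 by simp
  moreover have "c \<noteq> 0" using x1 u0 v0 unfolding x_def by (metis divide_eq_0_iff)
  ultimately have "c = 1" by (metis mult_cancel_right2)
  then have "- a = b" using b0 by (simp add: c_def field_simps)
  with ab have "(1::'a) = 0" by (metis add.commute neg_eq_iff_add_eq_0)
  then show False by simp
qed

theorem lemma3: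
  fixes p1 p2 a1 a2 m t :: nat and \<gamma> :: "'a::{field,finite}" and P :: "'a poly"
  assumes "prime p1" and "prime p2" and "p1 > 2" and "p2 > 2" and "p1 \<noteq> p2"
    and "a1 > 0" and "a2 > 0"
    and "m = p1 ^ a1 * p2 ^ a2"
    and "t = ord m 2"
    and "card (UNIV :: 'a set) = 2 ^ t"
    and "\<gamma> ^ m = 1" and "\<forall>k. 0 < k \<and> k < m \<longrightarrow> \<gamma> ^ k \<noteq> 1"
    and "decoding_poly (canonical_set (p1 ^ a1) (p2 ^ a2)) \<gamma> P"
  shows "card {i. Polynomial.coeff P i \<noteq> 0} \<ge> 3"
proof (rule ccontr)
  assume lt: "\<not> card {i. Polynomial.coeff P i \<noteq> 0} \<ge> 3"
  define q1 where "q1 = p1 ^ a1"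
  define q2 where "q2 = p2 ^ a2"
  define N where "N = {i. Polynomial.coeff P i \<noteq> 0}"
  have cop: "coprime q1 q2" unfolding q1_def q2_def
    using assms(1,2,5) by (simp add: primes_coprime)
  have q1g: "q1 > 1" unfolding q1_def using assms(3,6)
    by (metis less_trans one_less_numeral_iff one_less_power semiring_norm(76))
  have q2g: "q2 > 1" unfolding q2_def using assms(4,7)
    by (metis less_trans one_less_numeral_iff one_less_power semiring_norm(76))
  have mq: "m = q1 * q2" using assms(8) q1_def q2_def by simp
  have m1: "m > 1" using q1g q2g mq by (simp add: one_less_mult)
  define s1 where "s1 = canon_elem q1 q2 0 1"
  define s2 where "s2 = canon_elem q1 q2 1 0"
  have c1: "[s1 = 0] (mod q1)" "[s1 = 1] (mod q2)"
    using canon_prop[OF cop, of 0 1] q1g q2g by (auto simp: s1_def)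
  have c2: "[s2 = 1] (mod q1)" "[s2 = 0] (mod q2)"
    using canon_prop[OF cop, of 1 0] q1g q2g by (auto simp: s2_def)
  have "[s1 + s2 = 0 + 1] (mod q1)" by (rule cong_add[OF c1(1) c2(1)])
  moreover have "[s1 + s2 = 1 + 0] (mod q2)" by (rule cong_add[OF c1(2) c2(2)])
  ultimately have "[s1 + s2 = 1] (mod q1 * q2)"
    using coprime_cong_mult_nat cop by simp
  hence sm: "(s1 + s2) mod m = 1" using mq m1 unfolding cong_def by (metis mod_less)
  have S: "canonical_set q1 q2 = {s1, s2, canon_elem q1 q2 1 1}"
    by (simp add: canonical_set_def s1_def s2_def)
  have dp: "decoding_poly (canonical_set q1 q2) \<gamma> P" using assms(13) q1_def q2_def by simp
  have c11: "canon_elem q1 q2 1 1 = 1"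
  proof -
    have "canon_elem q1 q2 1 1 < q1 * q2 \<and> [canon_elem q1 q2 1 1 = 1] (mod q1 * q2)"
      using canon_prop[OF cop, of 1 1] q1g q2g coprime_cong_mult_nat cop by auto
    moreover have "1 < q1 * q2" using q1g q2g by (simp add: one_less_mult)
    ultimately show ?thesis using cong_less_modulus_unique_nat by blast
  qed
  have P1: "poly P 1 = 1" and Pg: "poly P \<gamma> = 0"
    and Ps1: "poly P (\<gamma> ^ s1) = 0" and Ps2: "poly P (\<gamma> ^ s2) = 0"
    using dp c11 unfolding decoding_poly_def S by auto
  have finN: "finite N"
  proof (rule finite_subset)
    show "N \<subseteq> {..degree P}" unfolding N_def using le_degree by auto
  qed simp
  have pe: "poly P x = (\<Sum>i\<in>N. Polynomial.coeff P i * x ^ i)" for x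
  proof -
    have "poly P x = (\<Sum>i\<le>degree P. Polynomial.coeff P i * x ^ i)" by (rule poly_altdef)
    also have "\<dots> = (\<Sum>i\<in>N. Polynomial.coeff P i * x ^ i)"
    proof (rule sum.mono_neutral_right)
      show "N \<subseteq> {..degree P}" unfolding N_def using le_degree by auto
    qed (auto simp: N_def)
    finally show ?thesis .
  qed
  have g0: "\<gamma> \<noteq> 0" proof
    assume "\<gamma> = 0" then have "\<gamma> ^ m = 0" using m1 by simp
    with assms(11) show False by simp
  qed
  have "card N < 3" using lt N_def by simp
  then consider "card N = 0" | "card N = 1" | "card N = 2" by linarith
  then show False
  proof cases
    case 1
    then have "N = {}" using finN by simp
    then show False using P1 pe[of 1] by simp
  next
    case 2
    then obtain k where "N = {k}" using card_1_singletonE by blast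
    then have "Polynomial.coeff P k = 1" "Polynomial.coeff P k * \<gamma> ^ k = 0" using P1 Pg pe[of 1] pe[of \<gamma>] by auto
    then show False using g0 by simp
  next
    case 3
    then obtain i j where N: "N = {i, j}" "i \<noteq> j" using card_2_iff[of N, THEN iffD1] by blast
    have ev: "poly P x = Polynomial.coeff P i * x ^ i + Polynomial.coeff P j * x ^ j" for x
      using pe[of x] N(2) unfolding N(1) by simp
    have pc: "(x ^ a) ^ b = (x ^ b) ^ a" for x :: 'a and a b
      by (simp only: power_mult[symmetric] mult.commute)
    show False
    proof (rule two_terms_false[of "Polynomial.coeff P i" "Polynomial.coeff P j" "\<gamma> ^ i" "\<gamma> ^ j" m s1 s2])
      show "Polynomial.coeff P i + Polynomial.coeff P j = 1" using P1 ev[of 1] by simp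
      show "\<gamma> ^ i \<noteq> 0" "\<gamma> ^ j \<noteq> 0" using g0 by auto
      show "(\<gamma> ^ i) ^ m = 1" using assms(11) pc[of \<gamma> i m] by simp
      show "(\<gamma> ^ j) ^ m = 1" using assms(11) pc[of \<gamma> j m] by simp
      show "1 < m" by (rule m1)
      show "Polynomial.coeff P i * \<gamma> ^ i + Polynomial.coeff P j * \<gamma> ^ j = 0" using Pg ev[of \<gamma>] by simp
      show "Polynomial.coeff P i * (\<gamma> ^ i) ^ s1 + Polynomial.coeff P j * (\<gamma> ^ j) ^ s1 = 0"
        using Ps1 ev[of "\<gamma> ^ s1"] by (simp only: pc[of \<gamma>])
      show "Polynomial.coeff P i * (\<gamma> ^ i) ^ s2 + Polynomial.coeff P j * (\<gamma> ^ j) ^ s2 = 0"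
        using Ps2 ev[of "\<gamma> ^ s2"] by (simp only: pc[of \<gamma>])
      show "(s1 + s2) mod m = 1" by (rule sm)
    qed
  qed
qed

end
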